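(* Let $K>0$, let $\eta:[0,K]\to\mathbb{R}$ be a speed-density relation, let $T>0$, and let $k_0\in(0,K]$ be a density at which $\eta$ is differentiable; set $v_0=\eta(k_0)$. Consider Phillips' model $$k_t+(kv)_x=0,\qquad v_t+v v_x=\frac{\eta(k)-v}{T},$$ linearized about the equilibrium $(k_0,v_0)$, i.e. the linear system for perturbations $\kappa(t,x),\nu(t,x)$: $$\kappa_t+v_0\kappa_x+k_0\nu_x=0,\qquad \nu_t+v_0\nu_x=\frac{\eta'(k_0)\kappa-\nu}{T}.$$ Call this linearized system linearly stable if for every real $m\neq 0$ and every complex $\omega$ for which the system admits a solution $(\kappa,\nu)=(a,b)e^{i(mx-\omega t)}$ with $(a,b)\in\mathbb{C}^2\setminus\{(0,0)\}$, one has $\operatorname{Im}\omega<0$. Then the linearized system is not linearly stable (Phillips' model is linearly unstable): there exist a real $m\neq 0$, a complex $\omega$ with $\operatorname{Im}\omega\ge 0$, and $(a,b)\neq(0,0)$ such that $(a,b)e^{i(mx-\omega t)}$ solves the linearized system.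
   Context: $k(t,x)$ is traffic density, $v(t,x)$ is traffic speed, $K$ is the jam density, and $T$ is the relaxation time. *)

theory Defs
  imports "HOL-Analysis.Analysis"
begin

definition solves_linearized ::
  "real \<Rightarrow> real \<Rightarrow> real \<Rightarrow> real \<Rightarrow> (real \<Rightarrow> real \<Rightarrow> complex) \<Rightarrow> (real \<Rightarrow> real \<Rightarrow> complex) \<Rightarrow> bool" where
  "solves_linearized k0 v0 d T \<kappa> \<nu> \<longleftrightarrow>
     (\<forall>t x. \<exists>\<kappa>t \<kappa>x \<nu>t \<nu>x.
        ((\<lambda>s. \<kappa> s x) has_vector_derivative \<kappa>t) (at t) \<and>
        ((\<lambda>y. \<kappa> t y) has_vector_derivative \<kappa>x) (at x) \<and>
        ((\<lambda>s. \<nu> s x) has_vector_derivative \<nu>t) (at t) \<and>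
        ((\<lambda>y. \<nu> t y) has_vector_derivative \<nu>x) (at x) \<and>
        \<kappa>t + of_real v0 * \<kappa>x + of_real k0 * \<nu>x = 0 \<and>
        \<nu>t + of_real v0 * \<nu>x = (of_real d * \<kappa> t x - \<nu> t x) / of_real T)"

definition plane_wave :: "complex \<Rightarrow> real \<Rightarrow> complex \<Rightarrow> real \<Rightarrow> real \<Rightarrow> complex" where
  "plane_wave c m \<omega> t x = c * exp (\<i> * (of_real m * of_real x - \<omega> * of_real t))"

end

theory Submission
  imports Defs
begin

lemma pw_dt:
  "((\<lambda>s. plane_wave c m \<omega> s x) has_vector_derivative (- \<i> * \<omega> * plane_wave c m \<omega> t x)) (at t)"
proof -
  let ?g = "\<lambda>z::complex. c * exp (\<i> * (of_real m * of_real x - \<omega> * z))"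
  have "(?g has_field_derivative (- \<i> * \<omega> * ?g (of_real t))) (at (of_real t))"
    by (auto intro!: derivative_eq_intros simp: algebra_simps)
  from has_vector_derivative_real_field[OF this]
  show ?thesis by (simp add: plane_wave_def)
qed

lemma pw_dx:
  "((\<lambda>y. plane_wave c m \<omega> t y) has_vector_derivative (\<i> * of_real m * plane_wave c m \<omega> t x)) (at x)"
proof -
  let ?g = "\<lambda>z::complex. c * exp (\<i> * (of_real m * z - \<omega> * of_real t))"
  have "(?g has_field_derivative (\<i> * of_real m * ?g (of_real x))) (at (of_real x))"
    by (auto intro!: derivative_eq_intros simp: algebra_simps)
  from has_vector_derivative_real_field[OF this]
  show ?thesis by (simp add: plane_wave_def)
qed

lemma pw_solves:
  assumes T: "T \<noteq> 0"
    and e1: "(\<omega> - of_real m * of_real v0) * a = of_real m * of_real k0 * b"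
    and e2: "- \<i> * (\<omega> - of_real m * of_real v0) * b * of_real T = of_real d * a - b"
  shows "solves_linearized k0 v0 d T (plane_wave a m \<omega>) (plane_wave b m \<omega>)"
  unfolding solves_linearized_def
proof (intro allI)
  fix t x
  define E where "E = exp (\<i> * (of_real m * of_real x - \<omega> * of_real t))"
  have pa: "plane_wave a m \<omega> t x = a * E" and pb: "plane_wave b m \<omega> t x = b * E"
    by (simp_all add: plane_wave_def E_def)
  have 1: "- \<i> * \<omega> * (a * E) + of_real v0 * (\<i> * of_real m * (a * E)) + of_real k0 * (\<i> * of_real m * (b * E)) = 0"
  proof -
    have "- \<i> * \<omega> * (a * E) + of_real v0 * (\<i> * of_real m * (a * E)) + of_real k0 * (\<i> * of_real m * (b * E))
        = - \<i> * E * ((\<omega> - of_real m * of_real v0) * a - of_real m * of_real k0 * b)"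
      by (simp add: algebra_simps)
    then show ?thesis using e1 by simp
  qed
  have 2: "- \<i> * \<omega> * (b * E) + of_real v0 * (\<i> * of_real m * (b * E)) = (of_real d * (a * E) - b * E) / of_real T"
  proof -
    have "- \<i> * \<omega> * (b * E) + of_real v0 * (\<i> * of_real m * (b * E)) = E * (- \<i> * (\<omega> - of_real m * of_real v0) * b)"
      by (simp add: algebra_simps)
    also have "\<dots> = E * ((of_real d * a - b) / of_real T)"
    proof -
      have "- \<i> * (\<omega> - of_real m * of_real v0) * b = (of_real d * a - b) / of_real T"
        using e2 T by (simp add: eq_divide_eq)
      then show ?thesis by simp
    qed
    also have "\<dots> = (of_real d * (a * E) - b * E) / of_real T"
      by (simp add: algebra_simps)
    finally show ?thesis .
  qed
  show "\<exists>\<kappa>t \<kappa>x \<nu>t \<nu>x.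
        ((\<lambda>s. plane_wave a m \<omega> s x) has_vector_derivative \<kappa>t) (at t) \<and>
        ((\<lambda>y. plane_wave a m \<omega> t y) has_vector_derivative \<kappa>x) (at x) \<and>
        ((\<lambda>s. plane_wave b m \<omega> s x) has_vector_derivative \<nu>t) (at t) \<and>
        ((\<lambda>y. plane_wave b m \<omega> t y) has_vector_derivative \<nu>x) (at x) \<and>
        \<kappa>t + of_real v0 * \<kappa>x + of_real k0 * \<nu>x = 0 \<and>
        \<nu>t + of_real v0 * \<nu>x = (of_real d * plane_wave a m \<omega> t x - plane_wave b m \<omega> t x) / of_real T"
    apply (rule exI[of _ "- \<i> * \<omega> * plane_wave a m \<omega> t x"])
    apply (rule exI[of _ "\<i> * of_real m * plane_wave a m \<omega> t x"])
    apply (rule exI[of _ "- \<i> * \<omega> * plane_wave b m \<omega> t x"])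
    apply (rule exI[of _ "\<i> * of_real m * plane_wave b m \<omega> t x"])
    using pw_dt[where c=a and m=m and \<omega>=\<omega> and x=x and t=t] pw_dx[where c=a and m=m and \<omega>=\<omega> and x=x and t=t]
      pw_dt[where c=b and m=m and \<omega>=\<omega> and x=x and t=t] pw_dx[where c=b and m=m and \<omega>=\<omega> and x=x and t=t] 1 2
    unfolding pa pb by blast
qed

theorem theorem2p2:
  fixes K T k0 d :: real and \<eta> :: "real \<Rightarrow> real"
  assumes "K > 0" and "T > 0" and "k0 \<in> {0<..K}"
    and "(\<eta> has_real_derivative d) (at k0 within {0..K})"
  shows "\<exists>m \<omega> a b. m \<noteq> 0 \<and> Im \<omega> \<ge> 0 \<and> (a, b) \<noteq> (0, 0) \<and>
           solves_linearized k0 (\<eta> k0) d T (plane_wave a m \<omega>) (plane_wave b m \<omega>)"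
proof (cases "d = 0")
  case True
  have "solves_linearized k0 (\<eta> k0) d T (plane_wave 1 1 (of_real (\<eta> k0))) (plane_wave 0 1 (of_real (\<eta> k0)))"
    using assms(2) True by (intro pw_solves) auto
  then show ?thesis by (intro exI[of _ 1] exI[of _ "of_real (\<eta> k0)"] exI[of _ 1] exI[of _ 0]) auto
next
  case False
  have k0: "k0 > 0" using assms(3) by simp
  define m where "m = 10 / (9 * T * d * k0)"
  define s where "s = (2 + \<i>) / (3 * of_real T)"
  define \<omega> where "\<omega> = of_real m * of_real (\<eta> k0) + s"
  define a where "a = of_real m * of_real k0 / s"
  have Tn: "(of_real T :: complex) \<noteq> 0" using assms(2) by simp
  have sn: "s \<noteq> 0" using Tn by (simp add: s_def complex_eq_iff)
  have m0: "m \<noteq> 0" using False k0 assms(2) by (simp add: m_def)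
  have Ims: "Im s \<ge> 0" using assms(2) by (simp add: s_def)
  have key: "- \<i> * s * of_real T = of_real d * a - 1"
  proof -
    have dm: "of_real d * of_real m * of_real k0 = (10 / (9 * of_real T) :: complex)"
      using False k0 assms(2) by (simp add: m_def field_simps)
    have "of_real d * a = of_real d * of_real m * of_real k0 / s" by (simp add: a_def)
    also have "\<dots> = 10 / (9 * of_real T) / s" using dm by simp
    also have "\<dots> = 10 / (3 * (2 + \<i>))"
      using Tn by (simp add: s_def field_simps)
    also have "\<dots> = (2 - \<i>) * 2 / 3"
    proof -
      have nz: "3 * (2 + \<i>) \<noteq> (0::complex)" by (simp add: complex_eq_iff)
      have eq: "(10::complex) = (2 - \<i>) * 2 / 3 * (3 * (2 + \<i>))"
        by (simp add: algebra_simps complex_eq_iff)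
      show ?thesis by (subst nonzero_divide_eq_eq[OF nz]) (rule eq)
    qed
    finally have "of_real d * a = (2 - \<i>) * 2 / 3" .
    then show ?thesis using Tn by (simp add: s_def field_simps complex_eq_iff)
  qed
  have "solves_linearized k0 (\<eta> k0) d T (plane_wave a m \<omega>) (plane_wave 1 m \<omega>)"
    apply (rule pw_solves)
    using assms(2) apply simp
    using sn apply (simp add: \<omega>_def a_def)
    using key apply (simp add: \<omega>_def)
    done
  then show ?thesis using m0 Ims
    by (intro exI[of _ m] exI[of _ \<omega>] exI[of _ a] exI[of _ 1]) (auto simp: \<omega>_def)
qed

end
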